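(* Let $\mathcal H$ be a Hilbert space, $\mathcal T,\widehat{\mathcal T}:\mathcal H\to\mathcal H$ bounded linear operators and $q,p,\widehat q,\widehat p\in\mathcal H$, and let $\Delta_{\mathcal T},\Delta_p,\Delta_q\ge0$ satisfy $\|\widehat{\mathcal T}-\mathcal T\|\le\Delta_{\mathcal T}$, $\|\widehat p-p\|\le\Delta_p$, $\|\widehat q-q\|\le\Delta_q$. For $\lambda>0$ let $\widehat\theta_\lambda$ be any minimizer over $\theta'\in\mathcal H$ of $\|\widehat{\mathcal T}\theta'-\widehat q+\widehat p\|+\lambda\|\theta'\|$. Then $$\|\mathcal T\widehat\theta_\lambda-q+p\|\le\max\Big\{1,\frac{\Delta_{\mathcal T}}{\lambda}\Big\}\inf_{\theta'\in\mathcal H}\Big(\|\mathcal T\theta'-q+p\|+(\Delta_{\mathcal T}+\lambda)\|\theta'\|\Big)+\max\Big\{2,1+\frac{\Delta_{\mathcal T}}{\lambda}\Big\}(\Delta_q+\Delta_p).$$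
   Context: $\|\cdot\|$ denotes the Hilbert space norm on elements and the operator norm on operators. *)

theory Defs
  imports "HOL-Analysis.Analysis"
begin

end

theory Submission
  imports Defs
begin

theorem lemma8:
  fixes T T_hat :: "'a::{real_inner, complete_space} \<Rightarrow>\<^sub>L 'a"
    and q p q_hat p_hat theta_hat :: 'a
    and \<Delta>T \<Delta>p \<Delta>q lam :: real
  assumes "\<Delta>T \<ge> 0" and "\<Delta>p \<ge> 0" and "\<Delta>q \<ge> 0"
    and "norm (T_hat - T) \<le> \<Delta>T"
    and "norm (p_hat - p) \<le> \<Delta>p"
    and "norm (q_hat - q) \<le> \<Delta>q"
    and "lam > 0"
    and "\<forall>\<theta>'. norm (T_hat theta_hat - q_hat + p_hat) + lam * norm theta_hat
                \<le> norm (T_hat \<theta>' - q_hat + p_hat) + lam * norm \<theta>'"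
  shows "norm (T theta_hat - q + p)
         \<le> max 1 (\<Delta>T / lam) * (INF \<theta>'. norm (T \<theta>' - q + p) + (\<Delta>T + lam) * norm \<theta>')
           + max 2 (1 + \<Delta>T / lam) * (\<Delta>q + \<Delta>p)"
proof -
  define M where "M = max 1 (\<Delta>T / lam)"
  define d where "d = \<Delta>q + \<Delta>p"
  have M1: "M \<ge> 1" unfolding M_def by simp
  have M2: "max 2 (1 + \<Delta>T / lam) = M + 1" unfolding M_def by (simp add: max_def)
  have diff: "norm ((T_hat x - q_hat + p_hat) - (T x - q + p)) \<le> \<Delta>T * norm x + d" for x
  proof -
    have e: "(T_hat x - q_hat + p_hat) - (T x - q + p) = (T_hat - T) x - (q_hat - q) + (p_hat - p)"
      by (simp add: blinfun.diff_left)
    have "norm ((T_hat - T) x) \<le> norm (T_hat - T) * norm x" by (rule norm_blinfun)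
    also have "\<dots> \<le> \<Delta>T * norm x" using assms(4) by (simp add: mult_right_mono)
    finally have a: "norm ((T_hat - T) x) \<le> \<Delta>T * norm x" .
    have t1: "norm ((T_hat - T) x - (q_hat - q) + (p_hat - p)) \<le> norm ((T_hat - T) x - (q_hat - q)) + norm (p_hat - p)"
      by (rule norm_triangle_ineq)
    have t2: "norm ((T_hat - T) x - (q_hat - q)) \<le> norm ((T_hat - T) x) + norm (q_hat - q)"
      by (rule norm_triangle_ineq4)
    have "norm ((T_hat - T) x - (q_hat - q) + (p_hat - p)) \<le> norm ((T_hat - T) x) + norm (q_hat - q) + norm (p_hat - p)"
      using t1 t2 by linarith
    then show ?thesis unfolding e d_def using a assms(5,6) by linarith
  qed
  have key: "norm (T theta_hat - q + p) \<le> M * (norm (T t - q + p) + (\<Delta>T + lam) * norm t) + (M + 1) * d" for t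
  proof -
    let ?rh = "norm (T_hat theta_hat - q_hat + p_hat)"
    have s1: "norm (T theta_hat - q + p) \<le> ?rh + \<Delta>T * norm theta_hat + d"
      using diff[of theta_hat] norm_triangle_ineq2[of "T theta_hat - q + p" "T_hat theta_hat - q_hat + p_hat"]
        norm_minus_commute[of "T theta_hat - q + p" "T_hat theta_hat - q_hat + p_hat"]
      by linarith
    have "\<Delta>T * norm theta_hat \<le> M * lam * norm theta_hat"
    proof -
      have "\<Delta>T \<le> M * lam" using assms(7) unfolding M_def
        by (simp add: pos_divide_le_eq max_def mult.commute)
      then show ?thesis by (simp add: mult_right_mono)
    qed
    moreover have "?rh \<le> M * ?rh" using M1 by (simp add: mult_le_cancel_right1)
    ultimately have s2: "?rh + \<Delta>T * norm theta_hat \<le> M * (?rh + lam * norm theta_hat)"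
      by (simp add: algebra_simps)
    have "?rh + lam * norm theta_hat \<le> norm (T_hat t - q_hat + p_hat) + lam * norm t"
      using assms(8) by blast
    also have "\<dots> \<le> norm (T t - q + p) + \<Delta>T * norm t + d + lam * norm t"
      using diff[of t] norm_triangle_ineq2[of "T_hat t - q_hat + p_hat" "T t - q + p"] by linarith
    finally have s3: "?rh + lam * norm theta_hat \<le> norm (T t - q + p) + (\<Delta>T + lam) * norm t + d"
      by (simp add: algebra_simps)
    have "M * (?rh + lam * norm theta_hat) \<le> M * (norm (T t - q + p) + (\<Delta>T + lam) * norm t + d)"
      using s3 M1 by (simp add: mult_left_mono)
    then show ?thesis using s1 s2 by (simp add: algebra_simps)
  qed
  have "(norm (T theta_hat - q + p) - (M + 1) * d) / M \<le> (INF \<theta>'. norm (T \<theta>' - q + p) + (\<Delta>T + lam) * norm \<theta>')"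
  proof (rule cINF_greatest)
    show "UNIV \<noteq> {}" by simp
    fix t
    show "(norm (T theta_hat - q + p) - (M + 1) * d) / M \<le> norm (T t - q + p) + (\<Delta>T + lam) * norm t"
      using key[of t] M1 by (simp add: pos_divide_le_eq algebra_simps)
  qed
  then have "norm (T theta_hat - q + p) - (M + 1) * d \<le> M * (INF \<theta>'. norm (T \<theta>' - q + p) + (\<Delta>T + lam) * norm \<theta>')"
    using M1 by (simp add: pos_divide_le_eq mult.commute)
  then show ?thesis unfolding M2 unfolding M_def d_def by linarith
qed

end
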